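(* For every integer $n\ge 0$, $$\sum_{\pi\in \mathcal I^C_{2n+1}(321)}q^{\mathrm{des}^+(\pi)}=\sum_{k=0}^{\lfloor n/2\rfloor}\binom{\lceil n/2\rceil}{k}\binom{\lfloor n/2\rfloor}{k}q^k,\qquad \sum_{\pi\in \mathcal I^C_{2n+1}(321)}q^{\mathrm{maj}^+(\pi)}=\binom{n}{\lfloor n/2\rfloor}_q,$$ $$\sum_{\pi\in \mathcal I^C_{2n+1}(321)}q^{\mathrm{des}(\pi)}=\sum_{k=0}^{\lfloor n/2\rfloor}\binom{\lceil n/2\rceil}{k}\binom{\lfloor n/2\rfloor}{k}q^{2k}.$$
   Context: A permutation $\pi\in\mathcal S_m$ is centrosymmetric if $\pi(i)+\pi(m+1-i)=m+1$ for all $i$. $\mathcal I^C_m(321)$ is the set of centrosymmetric involutions in $\mathcal S_m$ avoiding the pattern $321$. $\mathrm{Des}(\pi)$ is the set of descents $i\in\{1,\dots,m-1\}$ ($\pi(i)>\pi(i+1)$), $\mathrm{des}(\pi)=|\mathrm{Des}(\pi)|$. With $n=\lfloor m/2\rfloor$, $\mathrm{Des}^+(\pi)=\mathrm{Des}(\pi)\cap\{1,\dots,n\}$, $\mathrm{des}^+(\pi)=|\mathrm{Des}^+(\pi)|$, $\mathrm{maj}^+(\pi)=\sum_{i\in\mathrm{Des}^+(\pi)}i$. $\binom{n}{h}_q$ is the Gaussian binomial coefficient. *)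

theory Defs
  imports "HOL-Combinatorics.Permutations"
begin

text \<open>Permutations of [m] = {1..m} are functions nat => nat permuting {1..m}
 (identity outside).\<close>

definition centrosymmetric :: "nat \<Rightarrow> (nat \<Rightarrow> nat) \<Rightarrow> bool" where
  "centrosymmetric m \<pi> \<longleftrightarrow> (\<forall>i\<in>{1..m}. \<pi> i + \<pi> (m + 1 - i) = m + 1)"

definition involution_on :: "nat \<Rightarrow> (nat \<Rightarrow> nat) \<Rightarrow> bool" where
  "involution_on m \<pi> \<longleftrightarrow> (\<forall>i\<in>{1..m}. \<pi> (\<pi> i) = i)"

definition avoids321 :: "nat \<Rightarrow> (nat \<Rightarrow> nat) \<Rightarrow> bool" where
  "avoids321 m \<pi> \<longleftrightarrow>
     \<not> (\<exists>i j k. 1 \<le> i \<and> i < j \<and> j < k \<and> k \<le> m \<and> \<pi> i > \<pi> j \<and> \<pi> j > \<pi> k)"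

definition ICinv321 :: "nat \<Rightarrow> (nat \<Rightarrow> nat) set" where
  "ICinv321 m = {\<pi>. \<pi> permutes {1..m} \<and> involution_on m \<pi> \<and> centrosymmetric m \<pi> \<and> avoids321 m \<pi>}"

definition Des :: "nat \<Rightarrow> (nat \<Rightarrow> nat) \<Rightarrow> nat set" where
  "Des m \<pi> = {i \<in> {1..<m}. \<pi> i > \<pi> (i + 1)}"

definition des :: "nat \<Rightarrow> (nat \<Rightarrow> nat) \<Rightarrow> nat" where
  "des m \<pi> = card (Des m \<pi>)"

definition Des_plus :: "nat \<Rightarrow> (nat \<Rightarrow> nat) \<Rightarrow> nat set" where
  "Des_plus m \<pi> = Des m \<pi> \<inter> {1..m div 2}"

definition des_plus :: "nat \<Rightarrow> (nat \<Rightarrow> nat) \<Rightarrow> nat" where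
  "des_plus m \<pi> = card (Des_plus m \<pi>)"

definition maj_plus :: "nat \<Rightarrow> (nat \<Rightarrow> nat) \<Rightarrow> nat" where
  "maj_plus m \<pi> = \<Sum> (Des_plus m \<pi>)"

fun qbinom :: "'a::comm_semiring_1 \<Rightarrow> nat \<Rightarrow> nat \<Rightarrow> 'a" where
  "qbinom q n 0 = 1"
| "qbinom q 0 (Suc k) = 0"
| "qbinom q (Suc n) (Suc k) = qbinom q n k + q ^ Suc k * qbinom q n (Suc k)"

end

theory Submission
  imports Defs
begin


lemma qbinom_gt: "k > n \<Longrightarrow> qbinom q n k = 0"
proof (induction n arbitrary: k)
  case 0 then show ?case by (cases k) auto
next
  case (Suc n) then show ?case by (cases k) auto
qed

lemma qbinom_nn: "qbinom q n n = 1"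
  by (induction n) (auto simp: qbinom_gt)

lemma qbinom_pascal2:
  "qbinom (q::'a::comm_semiring_1) (Suc n) (Suc k) = q ^ (n - k) * qbinom q n k + qbinom q n (Suc k)"
proof (induction n arbitrary: k)
  case 0 then show ?case by (cases k) auto
next
  case (Suc n)
  show ?case
  proof (cases "k \<le> n")
    case False
    then have "k = Suc n \<or> k > Suc n" by auto
    then show ?thesis
    proof
      assume "k = Suc n" then show ?thesis by (simp add: qbinom_nn qbinom_gt)
    next
      assume "k > Suc n" then show ?thesis by (simp add: qbinom_gt)
    qed
  next
    case True
    show ?thesis
    proof (cases k)
      case 0
      have e: "1 + q * qbinom q n (Suc 0) = q ^ n + qbinom q n (Suc 0)" using Suc.IH[of 0] by simp
      have e2: "q * (1 + q * qbinom q n (Suc 0)) = q * (q ^ n + qbinom q n (Suc 0))" using e by simp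
      show ?thesis using 0 e2 by (simp add: algebra_simps)
    next
      case (Suc k')
      have i1: "qbinom q (Suc n) (Suc k') = q ^ (n - k') * qbinom q n k' + qbinom q n (Suc k')" by (rule Suc.IH)
      have i2: "qbinom q (Suc n) (Suc k) = q ^ (n - k) * qbinom q n k + qbinom q n (Suc k)" by (rule Suc.IH)
      have p1: "q ^ Suc k * q ^ (n - k) = q ^ Suc n" using True by (simp add: power_add[symmetric] del: power_Suc)
      have p2: "n - k' = Suc n - k" using True Suc by simp
      have p5: "q ^ (Suc n - k) * q ^ k = q ^ Suc n" using True by (simp add: power_add[symmetric] del: power_Suc)
      have L: "qbinom q (Suc (Suc n)) (Suc k) = qbinom q (Suc n) k + q ^ Suc k * qbinom q (Suc n) (Suc k)"
        by (rule qbinom.simps(3))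
      have R1: "qbinom q (Suc n) k = qbinom q n k' + q ^ k * qbinom q n k"
        using Suc by (simp only: qbinom.simps(3))
      have R2: "qbinom q (Suc n) (Suc k) = qbinom q n k + q ^ Suc k * qbinom q n (Suc k)"
        by (rule qbinom.simps(3))
      have i1': "qbinom q (Suc n) k = q ^ (Suc n - k) * qbinom q n k' + qbinom q n k"
        using i1 unfolding Suc[symmetric] p2 .
      have "qbinom q (Suc (Suc n)) (Suc k) = q ^ (Suc n - k) * qbinom q n k' + qbinom q n k
           + (q ^ Suc k * q ^ (n - k)) * qbinom q n k + q ^ Suc k * qbinom q n (Suc k)"
        unfolding L i1' i2 by (simp add: algebra_simps)
      also have "\<dots> = q ^ (Suc n - k) * (qbinom q n k' + q ^ k * qbinom q n k)
           + (qbinom q n k + q ^ Suc k * qbinom q n (Suc k))"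
      proof -
        have "q ^ k * (qbinom q n k * q ^ (Suc n - k)) = (q ^ (Suc n - k) * q ^ k) * qbinom q n k"
          by (simp add: ac_simps)
        then have "q ^ k * (qbinom q n k * q ^ (Suc n - k)) = q ^ Suc n * qbinom q n k" using p5 by simp
        then show ?thesis unfolding p1 by (simp add: algebra_simps)
      qed
      finally show ?thesis unfolding R1[symmetric] R2[symmetric] .
    qed
  qed
qed

lemma qbinom_sym: "k \<le> n \<Longrightarrow> qbinom (q::'a::comm_semiring_1) n k = qbinom q n (n - k)"
proof (induction n arbitrary: k)
  case 0 then show ?case by simp
next
  case (Suc n)
  show ?case
  proof (cases k)
    case 0 then show ?thesis by (simp add: qbinom_nn)
  next
    case (Suc k')
    then have kn: "k' \<le> n" using Suc.prems by simp
    show ?thesis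
    proof (cases "k' = n")
      case True then show ?thesis using Suc by (simp add: qbinom_nn)
    next
      case False
      then have kn': "Suc k' \<le> n" using kn by simp
      have e: "Suc n - k = Suc (n - Suc k')" using Suc kn' by simp
      have "qbinom q (Suc n) (Suc n - k) = q ^ (n - (n - Suc k')) * qbinom q n (n - Suc k') + qbinom q n (Suc (n - Suc k'))"
        by (simp only: e qbinom_pascal2)
      also have "n - (n - Suc k') = Suc k'" using kn' by simp
      also have "Suc (n - Suc k') = n - k'" using kn' by simp
      also have "qbinom q n (n - Suc k') = qbinom q n (Suc k')" using Suc.IH[OF kn'] by simp
      also have "qbinom q n (n - k') = qbinom q n k'" using Suc.IH[OF kn] by simp
      finally show ?thesis using Suc by (simp add: algebra_simps)
    qed
  qed
qed

fun Bu :: "(nat \<Rightarrow> 'a::comm_ring_1) \<Rightarrow> nat \<Rightarrow> nat \<Rightarrow> 'a"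
and Bd :: "(nat \<Rightarrow> 'a::comm_ring_1) \<Rightarrow> nat \<Rightarrow> nat \<Rightarrow> 'a" where
  "Bu x 0 b = 0"
| "Bu x (Suc a) b = Bu x a b + Bd x a b"
| "Bd x a 0 = (if a = 0 then 1 else 0)"
| "Bd x a (Suc b) = x (a + b) * Bu x a b + Bd x a b"

definition BB :: "(nat \<Rightarrow> 'a::comm_ring_1) \<Rightarrow> nat \<Rightarrow> nat \<Rightarrow> 'a" where
  "BB x a b = Bu x a b + Bd x a b"

lemma Bu_Suc: "Bu x (Suc a) b = BB x a b" by (simp add: BB_def)

fun MU :: "(nat \<Rightarrow> 'a::comm_ring_1) \<Rightarrow> nat \<Rightarrow> nat \<Rightarrow> 'a"
and MN :: "(nat \<Rightarrow> 'a::comm_ring_1) \<Rightarrow> nat \<Rightarrow> nat \<Rightarrow> 'a" where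
  "MU x 0 h = 0"
| "MU x (Suc n) h = (if h = 0 then 0 else MU x n (h - 1) + MN x n (h - 1))"
| "MN x 0 h = (if h = 0 then 1 else 0)"
| "MN x (Suc n) h = x n * MU x n (Suc h) + MN x n (Suc h) + (if h = 0 then MU x n 0 + MN x n 0 else 0)"

lemma MUMN_closed:
  assumes sym: "\<And>c. BB x c (Suc c) = BB x (Suc c) c"
  shows "(\<forall>h. 0 < h \<and> h \<le> n \<longrightarrow> MU x n h = Bu x (n - (n - h) div 2) ((n - h) div 2)
                                   \<and> MN x n h = Bd x (n - (n - h) div 2) ((n - h) div 2))
       \<and> (\<forall>h. n < h \<longrightarrow> MU x n h = 0 \<and> MN x n h = 0)
       \<and> MU x n 0 = 0 \<and> MN x n 0 = BB x (n - n div 2) (n div 2)"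
proof (induction n)
  case 0
  then show ?case by (simp add: BB_def)
next
  case (Suc n)
  note IH1 = Suc.IH[THEN conjunct1, rule_format]
  note IH2 = Suc.IH[THEN conjunct2, THEN conjunct1, rule_format]
  have IH3: "MU x n 0 = 0" using Suc.IH by blast
  have IH4: "MN x n 0 = BB x (n - n div 2) (n div 2)" using Suc.IH by blast
  have A: "MU x (Suc n) h = Bu x (Suc n - (Suc n - h) div 2) ((Suc n - h) div 2)
         \<and> MN x (Suc n) h = Bd x (Suc n - (Suc n - h) div 2) ((Suc n - h) div 2)"
    if h: "0 < h" "h \<le> Suc n" for h
  proof
    obtain h' where h': "h = Suc h'" using h by (cases h) auto
    show "MU x (Suc n) h = Bu x (Suc n - (Suc n - h) div 2) ((Suc n - h) div 2)"
    proof (cases "h' = 0")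
      case True
      have e: "Suc n - n div 2 = Suc (n - n div 2)" by simp
      show ?thesis using True h' IH3 IH4 by (simp add: e BB_def)
    next
      case False
      have e: "Suc n - (n - h') div 2 = Suc (n - (n - h') div 2)" by simp
      show ?thesis using False h' h IH1[of h'] by (simp add: e BB_def)
    qed
    show "MN x (Suc n) h = Bd x (Suc n - (Suc n - h) div 2) ((Suc n - h) div 2)"
    proof (cases "Suc h \<le> n")
      case True
      define k where "k = (n - Suc h) div 2"
      have e1: "(Suc n - h) div 2 = Suc k" unfolding k_def using True
      proof -
        have "Suc n - h = Suc (Suc (n - Suc h))" using True by simp
        then show "(Suc n - h) div 2 = Suc ((n - Suc h) div 2)" by simp
      qed
      have e2: "Suc n - Suc k = n - k" by simp
      have e3: "n - k + k = n" unfolding k_def by simp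
      have m: "MU x n (Suc h) = Bu x (n - k) k \<and> MN x n (Suc h) = Bd x (n - k) k"
        using IH1[of "Suc h"] True unfolding k_def by simp
      have hz: "h \<noteq> 0" using h by simp
      show ?thesis unfolding e1 e2 using e3 m hz by simp
    next
      case False
      then have "(Suc n - h) div 2 = 0" using h by simp
      then show ?thesis using False h IH2[of "Suc h"] by simp
    qed
  qed
  have B: "MU x (Suc n) h = 0 \<and> MN x (Suc n) h = 0" if "Suc n < h" for h
    using that IH2[of "h - 1"] IH2[of "Suc h"] by simp
  have C: "MN x (Suc n) 0 = BB x (Suc n - Suc n div 2) (Suc n div 2)"
  proof (cases n)
    case 0 then show ?thesis by (simp add: BB_def)
  next
    case (Suc m)
    define k where "k = (n - 1) div 2"
    have k1: "(Suc n) div 2 = Suc k" unfolding k_def using Suc by simp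
    have k2: "n - k + k = n" unfolding k_def by simp
    have k3: "Suc n - Suc k = n - k" by simp
    have M1: "MU x n 1 = Bu x (n - k) k" "MN x n 1 = Bd x (n - k) k"
      using IH1[of 1] Suc k_def by auto
    have "MN x (Suc n) 0 = Bd x (n - k) (Suc k) + BB x (n - n div 2) (n div 2)"
      using M1 IH3 IH4 k2 by simp
    moreover have "Bu x (n - k) (Suc k) = BB x (n - n div 2) (n div 2)"
    proof (cases "even n")
      case True
      then obtain c where c: "n = 2 * c" by blast
      then have "c \<ge> 1" using Suc by simp
      then have "n - k = Suc c" "Suc k = c" "n - n div 2 = c" "n div 2 = c" using c unfolding k_def by auto
      then show ?thesis by (simp add: BB_def)
    next
      case False
      then obtain c where c: "n = 2 * c + 1" using oddE by blast
      then have "n - k = Suc c" "Suc k = Suc c" "n - n div 2 = Suc c" "n div 2 = c" unfolding k_def by auto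
      moreover have "Bu x (Suc c) (Suc c) = BB x (Suc c) c" by (simp only: Bu_Suc sym)
      ultimately show ?thesis by simp
    qed
    ultimately show ?thesis unfolding k1 k3 BB_def[of x "n - k" "Suc k"] Bd.simps by (simp add: algebra_simps)
  qed
  show ?case using A B C by simp
qed

lemma Bu0: "Bu x 0 b = 0" by simp

lemma maj_closed:
  fixes q :: "'a::comm_ring_1"
  shows "\<forall>a. BB (\<lambda>i. q ^ i) a b = qbinom q (a + b) b
          \<and> Bd (\<lambda>i. q ^ i) a (Suc b) = q ^ a * qbinom q (a + b) b"
proof (induction b)
  case 0
  have bb: "BB (\<lambda>i. q ^ i) a 0 = 1" for a
  proof (induction a)
    case 0 then show ?case by (simp add: BB_def)
  next
    case (Suc a) then show ?case by (simp add: BB_def Bu_Suc)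
  qed
  show ?case
  proof
    fix a
    show "BB (\<lambda>i. q ^ i) a 0 = qbinom q (a + 0) 0 \<and> Bd (\<lambda>i. q ^ i) a (Suc 0) = q ^ a * qbinom q (a + 0) 0"
    proof (cases a)
      case 0 then show ?thesis using bb by simp
    next
      case (Suc a')
      have "Bu (\<lambda>i. q ^ i) (Suc a') 0 = 1" using bb[of a'] by (simp only: Bu_Suc)
      then show ?thesis using bb[of a] Suc by simp
    qed
  qed
next
  case (Suc b)
  note IHb = Suc.IH
  have BBs: "BB (\<lambda>i. q ^ i) a (Suc b) = qbinom q (a + Suc b) (Suc b)" for a
  proof (induction a)
    case 0
    then show ?case using IHb[rule_format, of 0] by (simp add: BB_def qbinom_nn del: Bd.simps)
  next
    case (Suc a)
    have "BB (\<lambda>i. q ^ i) (Suc a) (Suc b) = qbinom q (a + Suc b) (Suc b) + q ^ Suc a * qbinom q (Suc a + b) b"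
      unfolding BB_def[of _ "Suc a"] Bu_Suc Suc.IH using IHb[rule_format, of "Suc a"] by simp
    also have "\<dots> = qbinom q (Suc (a + Suc b)) (Suc b)"
      unfolding qbinom_pascal2 by (simp add: algebra_simps)
    finally show ?case by simp
  qed
  have BD: "Bd (\<lambda>i. q ^ i) a (Suc (Suc b)) = q ^ a * qbinom q (a + Suc b) (Suc b)" for a
  proof (cases a)
    case 0
    have "Bd (\<lambda>i. q ^ i) 0 (Suc b) = 1" using IHb[rule_format, of 0] by (simp add: qbinom_nn del: Bd.simps)
    then show ?thesis using 0 by (simp add: qbinom_nn)
  next
    case (Suc a')
    have h1: "Bu (\<lambda>i. q ^ i) a (Suc b) = qbinom q (a' + Suc b) (Suc b)"
      unfolding Suc Bu_Suc by (rule BBs)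
    have h2: "Bd (\<lambda>i. q ^ i) a (Suc b) = q ^ a * qbinom q (a + b) b" using IHb by blast
    have e: "a + Suc b = Suc (a' + Suc b)" "a + b = a' + Suc b" using Suc by auto
    have "Bd (\<lambda>i. q ^ i) a (Suc (Suc b)) = q ^ (a + Suc b) * qbinom q (a' + Suc b) (Suc b) + q ^ a * qbinom q (a' + Suc b) b"
      using h1 h2 e by simp
    also have "\<dots> = q ^ a * (qbinom q (a' + Suc b) b + q ^ Suc b * qbinom q (a' + Suc b) (Suc b))"
      by (simp add: algebra_simps power_add)
    also have "\<dots> = q ^ a * qbinom q (a + Suc b) (Suc b)" unfolding e(1) by simp
    finally show ?thesis .
  qed
  show ?case using BD BBs by simp
qed

lemma BB_maj: "BB (\<lambda>i. (q::'a::comm_ring_1) ^ i) a b = qbinom q (a + b) b"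
  using maj_closed by blast

lemma BB_maj_sym: "BB (\<lambda>i. (q::'a::comm_ring_1) ^ i) c (Suc c) = BB (\<lambda>i. q ^ i) (Suc c) c"
proof -
  have "qbinom q (c + Suc c) (Suc c) = qbinom q (c + Suc c) (c + Suc c - Suc c)"
    by (rule qbinom_sym) simp
  then show ?thesis by (simp add: BB_maj)
qed

definition fT :: "'a::comm_ring_1 \<Rightarrow> nat \<Rightarrow> nat \<Rightarrow> nat \<Rightarrow> 'a" where
  "fT t a b i = of_nat (a choose i) * of_nat (b choose i) * t ^ i"

definition TT :: "'a::comm_ring_1 \<Rightarrow> nat \<Rightarrow> nat \<Rightarrow> 'a" where
  "TT t a b = (\<Sum>i\<le>a + b. fT t a b i)"

lemma fT_zero: "a < i \<Longrightarrow> fT t a b i = 0"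
  unfolding fT_def by (simp add: binomial_eq_0)

lemma TT_ext: "a \<le> N \<Longrightarrow> TT t a b = (\<Sum>i\<le>N. fT t a b i)"
  unfolding TT_def
  by (rule sum.mono_neutral_cong) (auto intro!: fT_zero)

lemma TT_sym: "TT t a b = TT t b a"
  unfolding TT_def fT_def by (simp add: ac_simps)

lemma fT_pt: "fT t (Suc a) (Suc b) (Suc i) = fT t a (Suc b) (Suc i) + fT t (Suc a) b (Suc i)
   + (t - 1) * fT t a b (Suc i) + (t * fT t a b i - t * fT t a b (Suc i))"
  unfolding fT_def by (simp add: algebra_simps)

lemma TT_rec: "TT t (Suc a) (Suc b) = TT t a (Suc b) + TT t (Suc a) b + (t - 1) * TT t a b"
proof -
  define N where "N = Suc (Suc a)"
  have s: "TT t a' b' = fT t a' b' 0 + (\<Sum>i<N. fT t a' b' (Suc i))" if "a' \<le> N" for a' b'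
    unfolding TT_ext[OF that] by (simp only: N_def sum.atMost_Suc_shift lessThan_Suc_atMost)
  have tel: "(\<Sum>i<N. t * fT t a b i - t * fT t a b (Suc i)) = t * fT t a b 0 - t * fT t a b N"
    using sum_lessThan_telescope'[of "\<lambda>i. t * fT t a b i" N] by simp
  have fN: "fT t a b N = 0" unfolding N_def by (rule fT_zero) simp
  have "TT t (Suc a) (Suc b) = fT t (Suc a) (Suc b) 0 + (\<Sum>i<N. fT t (Suc a) (Suc b) (Suc i))"
    by (rule s) (simp add: N_def)
  also have "(\<Sum>i<N. fT t (Suc a) (Suc b) (Suc i)) = (\<Sum>i<N. fT t a (Suc b) (Suc i)) + (\<Sum>i<N. fT t (Suc a) b (Suc i))
     + (t - 1) * (\<Sum>i<N. fT t a b (Suc i)) + (\<Sum>i<N. t * fT t a b i - t * fT t a b (Suc i))"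
    unfolding fT_pt by (simp add: sum.distrib sum_distrib_left)
  finally have L: "TT t (Suc a) (Suc b) = 1 + (\<Sum>i<N. fT t a (Suc b) (Suc i)) + (\<Sum>i<N. fT t (Suc a) b (Suc i))
     + (t - 1) * (\<Sum>i<N. fT t a b (Suc i)) + t"
    unfolding tel fN by (simp add: fT_def)
  have R1: "TT t a (Suc b) = 1 + (\<Sum>i<N. fT t a (Suc b) (Suc i))" by (subst s) (auto simp: N_def fT_def)
  have R2: "TT t (Suc a) b = 1 + (\<Sum>i<N. fT t (Suc a) b (Suc i))" by (subst s) (auto simp: N_def fT_def)
  have R3: "TT t a b = 1 + (\<Sum>i<N. fT t a b (Suc i))" by (subst s) (auto simp: N_def fT_def)
  show ?thesis unfolding L R1 R2 R3 by (simp add: algebra_simps)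
qed

lemma BB_des_rec: "BB (\<lambda>_. t) (Suc a) (Suc b) = BB (\<lambda>_. t) a (Suc b) + BB (\<lambda>_. t) (Suc a) b + (t - 1) * BB (\<lambda>_. t) a b"
proof -
  have "BB (\<lambda>_. t) (Suc a) (Suc b) = Bu (\<lambda>_. t) (Suc a) (Suc b) + Bd (\<lambda>_. t) (Suc a) (Suc b)"
    by (simp only: BB_def)
  also have "\<dots> = BB (\<lambda>_. t) a (Suc b) + t * Bu (\<lambda>_. t) (Suc a) b + Bd (\<lambda>_. t) (Suc a) b"
    by (simp only: Bu_Suc Bd.simps add.assoc)
  also have "\<dots> = BB (\<lambda>_. t) a (Suc b) + BB (\<lambda>_. t) (Suc a) b + (t - 1) * Bu (\<lambda>_. t) (Suc a) b"
    by (simp add: BB_def algebra_simps)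
  finally show ?thesis by (simp only: Bu_Suc)
qed

lemma BB_des_0a: "BB (\<lambda>_. t) 0 b = 1"
  by (induction b) (auto simp: BB_def)

lemma BB_des_a0: "BB (\<lambda>_. t) a 0 = 1"
  by (induction a) (auto simp: BB_def Bu_Suc)

lemma TT_0a: "TT t 0 b = 1"
  using TT_ext[of 0 0 t b] by (simp add: fT_def)

lemma TT_a0: "TT t a 0 = 1"
  using TT_sym TT_0a by metis

lemma BB_des: "BB (\<lambda>_. t) a b = TT t a b"
proof (induction a arbitrary: b)
  case 0 then show ?case by (simp add: BB_des_0a TT_0a)
next
  case (Suc a)
  note IHa = Suc.IH
  show ?case
  proof (induction b)
    case 0 then show ?case by (simp add: BB_des_a0 TT_a0)
  next
    case (Suc b)
    then show ?case using IHa by (simp add: BB_des_rec TT_rec)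
  qed
qed



datatype lt = U | D | F

lemma UNIV_lt: "(UNIV :: lt set) = {U, D, F}"
  using lt.exhaust by auto

lemma finite_lt: "finite (UNIV :: lt set)" by (simp add: UNIV_lt)

fun ht :: "lt list \<Rightarrow> nat" where
  "ht [] = 0"
| "ht (U # ws) = Suc (ht ws)"
| "ht (D # ws) = ht ws - 1"
| "ht (F # ws) = ht ws"

fun ok :: "lt list \<Rightarrow> bool" where
  "ok [] = True"
| "ok (U # ws) = ok ws"
| "ok (D # ws) = (ok ws \<and> 1 \<le> ht ws)"
| "ok (F # ws) = (ok ws \<and> ht ws = 0)"

fun wt :: "(nat \<Rightarrow> 'a::comm_ring_1) \<Rightarrow> lt list \<Rightarrow> 'a" where
  "wt x [] = 1"
| "wt x [c] = 1"
| "wt x (c # d # ws) = (if c = D \<and> d = U then x (Suc (length ws)) else 1) * wt x (d # ws)"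

definition RW :: "nat \<Rightarrow> nat \<Rightarrow> lt list set" where
  "RW n h = {ws. length ws = n \<and> ok ws \<and> ht ws = h}"

definition RWU :: "nat \<Rightarrow> nat \<Rightarrow> lt list set" where
  "RWU n h = {ws \<in> RW n h. ws \<noteq> [] \<and> hd ws = U}"

definition RWN :: "nat \<Rightarrow> nat \<Rightarrow> lt list set" where
  "RWN n h = RW n h - RWU n h"

lemma finite_RW: "finite (RW n h)"
proof -
  have "RW n h \<subseteq> {xs. set xs \<subseteq> UNIV \<and> length xs = n}" unfolding RW_def by auto
  moreover have "finite {xs. set xs \<subseteq> (UNIV::lt set) \<and> length xs = n}"
    by (rule finite_lists_length_eq) (rule finite_lt)
  ultimately show ?thesis by (rule finite_subset)
qed

lemma finite_RWU: "finite (RWU n h)" unfolding RWU_def using finite_RW by simp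
lemma finite_RWN: "finite (RWN n h)" unfolding RWN_def using finite_RW by simp

lemma RW_split: "sum f (RW n h) = sum f (RWU n h) + sum f (RWN n h)"
proof -
  have "RW n h = RWU n h \<union> RWN n h" "RWU n h \<inter> RWN n h = {}" unfolding RWN_def RWU_def by auto
  then show ?thesis using finite_RWU finite_RWN sum.union_disjoint by metis
qed

lemma RW_0: "RW 0 h = (if h = 0 then {[]} else {})"
  unfolding RW_def by auto

lemma RWU_Suc: "RWU (Suc n) h = (if h = 0 then {} else Cons U ` RW n (h - 1))"
proof (cases h)
  case 0 then show ?thesis unfolding RWU_def RW_def by (auto simp: neq_Nil_conv)
next
  case (Suc h')
  show ?thesis
  proof (intro set_eqI iffI)
    fix ws assume "ws \<in> RWU (Suc n) h"
    then obtain r where "ws = U # r" "r \<in> RW n h'" using Suc unfolding RWU_def RW_def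
      by (auto simp: neq_Nil_conv)
    then show "ws \<in> (if h = 0 then {} else Cons U ` RW n (h - 1))" using Suc by auto
  next
    fix ws assume "ws \<in> (if h = 0 then {} else Cons U ` RW n (h - 1))"
    then show "ws \<in> RWU (Suc n) h" using Suc unfolding RWU_def RW_def by auto
  qed
qed

lemma RWN_Suc: "RWN (Suc n) h = Cons D ` RW n (Suc h) \<union> (if h = 0 then Cons F ` RW n 0 else {})"
proof (intro set_eqI iffI)
  fix ws assume a: "ws \<in> RWN (Suc n) h"
  then have a1: "length ws = Suc n" "ok ws" "ht ws = h" "\<not> (ws \<noteq> [] \<and> hd ws = U)"
    unfolding RWN_def RWU_def RW_def by auto
  then obtain c r where ws: "ws = c # r" by (cases ws) auto
  show "ws \<in> Cons D ` RW n (Suc h) \<union> (if h = 0 then Cons F ` RW n 0 else {})"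
  proof (cases c)
    case U then show ?thesis using a1 ws by simp
  next
    case D
    then have "r \<in> RW n (Suc h)" using a1 ws unfolding RW_def by auto
    then show ?thesis using ws D by blast
  next
    case F
    then have "r \<in> RW n 0" "h = 0" using a1 ws unfolding RW_def by auto
    then show ?thesis using ws F by simp
  qed
next
  fix ws assume a: "ws \<in> Cons D ` RW n (Suc h) \<union> (if h = 0 then Cons F ` RW n 0 else {})"
  show "ws \<in> RWN (Suc n) h"
  proof (cases "ws \<in> Cons D ` RW n (Suc h)")
    case True
    then obtain r where "ws = D # r" "r \<in> RW n (Suc h)" by blast
    then show ?thesis unfolding RWN_def RWU_def RW_def by simp
  next
    case False
    then have "h = 0" "ws \<in> Cons F ` RW n 0" using a by (auto split: if_splits)
    then obtain r where "ws = F # r" "r \<in> RW n 0" by blast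
    then show ?thesis using \<open>h = 0\<close> unfolding RWN_def RWU_def RW_def by simp
  qed
qed

lemma wt_U: "wt x (U # ws) = wt x ws"
  by (cases ws) auto

lemma wt_F: "wt x (F # ws) = wt x ws"
  by (cases ws) auto

lemma wt_D: "wt x (D # ws) = (if ws \<noteq> [] \<and> hd ws = U then x (length ws) else 1) * wt x ws"
  by (cases ws) auto

lemma sum_Cons: "(\<Sum>ws\<in>Cons c ` A. f ws) = (\<Sum>ws\<in>A. f (c # ws))"
  by (subst sum.reindex) (auto simp: inj_on_def)

lemma RW_sums:
  "(\<Sum>ws\<in>RWU n h. wt x ws) = MU x n h \<and> (\<Sum>ws\<in>RWN n h. wt x ws) = MN x n h"
proof (induction n arbitrary: h)
  case 0
  have "RWU 0 h = {}" "RWN 0 h = (if h = 0 then {[]} else {})" unfolding RWN_def RWU_def RW_0 by auto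
  then show ?case by simp
next
  case (Suc n)
  have U: "(\<Sum>ws\<in>RWU (Suc n) h. wt x ws) = MU x (Suc n) h"
  proof (cases "h = 0")
    case True then show ?thesis by (simp add: RWU_Suc)
  next
    case False
    have "(\<Sum>ws\<in>RWU (Suc n) h. wt x ws) = (\<Sum>ws\<in>RW n (h - 1). wt x ws)"
      using False by (simp add: RWU_Suc sum_Cons wt_U)
    also have "\<dots> = MU x n (h - 1) + MN x n (h - 1)" using RW_split Suc.IH by metis
    finally show ?thesis using False by simp
  qed
  have Dsum: "(\<Sum>ws\<in>RW n (Suc h). wt x (D # ws)) = x n * MU x n (Suc h) + MN x n (Suc h)"
  proof -
    have "(\<Sum>ws\<in>RW n (Suc h). wt x (D # ws)) = (\<Sum>ws\<in>RWU n (Suc h). wt x (D # ws)) + (\<Sum>ws\<in>RWN n (Suc h). wt x (D # ws))"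
      by (rule RW_split)
    also have "(\<Sum>ws\<in>RWU n (Suc h). wt x (D # ws)) = (\<Sum>ws\<in>RWU n (Suc h). x n * wt x ws)"
      by (rule sum.cong) (auto simp: wt_D RWU_def RW_def)
    also have "(\<Sum>ws\<in>RWN n (Suc h). wt x (D # ws)) = (\<Sum>ws\<in>RWN n (Suc h). wt x ws)"
      by (rule sum.cong) (auto simp: wt_D RWU_def RWN_def RW_def)
    finally show ?thesis using Suc.IH by (simp add: sum_distrib_left[symmetric])
  qed
  have N: "(\<Sum>ws\<in>RWN (Suc n) h. wt x ws) = MN x (Suc n) h"
  proof (cases "h = 0")
    case False
    then show ?thesis using Dsum by (simp add: RWN_Suc sum_Cons)
  next
    case True
    have dj: "Cons D ` RW n (Suc h) \<inter> Cons F ` RW n 0 = {}" by auto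
    have "(\<Sum>ws\<in>RWN (Suc n) h. wt x ws) = (\<Sum>ws\<in>Cons D ` RW n (Suc h). wt x ws) + (\<Sum>ws\<in>Cons F ` RW n 0. wt x ws)"
      using True sum.union_disjoint[OF _ _ dj, of "wt x"] finite_RW by (simp add: RWN_Suc)
    also have "\<dots> = x n * MU x n (Suc h) + MN x n (Suc h) + (MU x n 0 + MN x n 0)"
      using Dsum RW_split[of "wt x" n 0] Suc.IH by (simp add: sum_Cons wt_F)
    finally show ?thesis using True by simp
  qed
  show ?case using U N by blast
qed

lemma RW_sum0: "(\<Sum>ws\<in>RW n 0. wt x ws) = MU x n 0 + MN x n 0"
  using RW_split RW_sums by metis



definition NC :: "nat \<Rightarrow> (nat \<Rightarrow> nat) \<Rightarrow> bool" where
  "NC N s \<longleftrightarrow> (\<forall>i j. 1 \<le> i \<longrightarrow> i < j \<longrightarrow> j \<le> N \<longrightarrow> j \<le> s j \<longrightarrow> s j < s i \<longrightarrow> False)"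

definition PS :: "nat \<Rightarrow> (nat \<Rightarrow> nat) \<Rightarrow> bool" where
  "PS N s \<longleftrightarrow> s permutes {1..N} \<and> (\<forall>i\<in>{1..N}. s (s i) = i) \<and> NC N s"

lemma perm_in: "s permutes {1..N} \<Longrightarrow> 1 \<le> i \<Longrightarrow> i \<le> N \<Longrightarrow> 1 \<le> s i \<and> s i \<le> N"
  using permutes_in_image[of s "{1..N}" i] by auto

lemma perm_out: "s permutes {1..N} \<Longrightarrow> \<not> (1 \<le> i \<and> i \<le> N) \<Longrightarrow> s i = i"
  using permutes_not_in[of s "{1..N}" i] by auto

lemma NC_iff:
  assumes p: "s permutes {1..N}" and inv: "\<forall>i\<in>{1..N}. s (s i) = i"
  shows "avoids321 N s \<longleftrightarrow> NC N s"
proof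
  assume a: "avoids321 N s"
  show "NC N s" unfolding NC_def
  proof (intro allI impI)
    fix i j assume h: "1 \<le> i" "i < j" "j \<le> N" "j \<le> s j" "s j < s i"
    have si: "s i \<le> N" using perm_in[OF p, of i] h by simp
    have ssi: "s (s i) = i" using inv h by simp
    show False
    proof (cases "s j = j")
      case True
      then have "1 \<le> i \<and> i < j \<and> j < s i \<and> s i \<le> N \<and> s i > s j \<and> s j > s (s i)"
        using h si ssi by simp
      then show False using a unfolding avoids321_def by blast
    next
      case False
      have sj: "s j \<le> N" using perm_in[OF p, of j] h by simp
      have ssj: "s (s j) = j" using inv h by simp
      have "1 \<le> i \<and> i < j \<and> j < s j \<and> s j \<le> N \<and> s i > s j \<and> s j > s (s j)"
        using h sj ssj False by simp
      then show False using a unfolding avoids321_def by blast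
    qed
  qed
next
  assume nc: "NC N s"
  show "avoids321 N s" unfolding avoids321_def
  proof
    assume "\<exists>i j k. 1 \<le> i \<and> i < j \<and> j < k \<and> k \<le> N \<and> s i > s j \<and> s j > s k"
    then obtain i j k where h: "1 \<le> i" "i < j" "j < k" "k \<le> N" "s i > s j" "s j > s k" by blast
    show False
    proof (cases "j \<le> s j")
      case True
      have "j \<le> N" using h by simp
      then show False using nc[unfolded NC_def, rule_format, of i j] h True by blast
    next
      case False
      have sk: "1 \<le> s k" using perm_in[OF p, of k] h by simp
      have ssj: "s (s j) = j" "s (s k) = k" using inv h by auto
      have "1 \<le> s k" "s k < s j" "s j \<le> N" "s j \<le> s (s j)" "s (s j) < s (s k)"
        using h sk ssj False by auto
      then show False using nc[unfolded NC_def, rule_format, of "s k" "s j"] by blast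
    qed
  qed
qed

lemma PS_iff: "(s permutes {1..N} \<and> involution_on N s \<and> avoids321 N s) \<longleftrightarrow> PS N s"
  unfolding PS_def involution_on_def using NC_iff by blast

lemma perm_of_inv:
  assumes "\<And>i. i \<notin> S \<Longrightarrow> f i = i" "\<And>i. i \<in> S \<Longrightarrow> f i \<in> S" "\<And>i. i \<in> S \<Longrightarrow> f (f i) = i"
  shows "f permutes S"
  unfolding permutes_def
proof (intro conjI allI impI)
  fix x assume "x \<notin> S" then show "f x = x" using assms by blast
next
  fix y
  show "\<exists>!x. f x = y"
  proof (cases "y \<in> S")
    case True
    show ?thesis
    proof (rule ex1I[of _ "f y"])
      show "f (f y) = y" using assms True by blast
    next
      fix x assume fx: "f x = y"
      show "x = f y"
      proof (cases "x \<in> S")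
        case True then show ?thesis using assms fx by metis
      next
        case False then show ?thesis using assms fx \<open>y \<in> S\<close> by metis
      qed
    qed
  next
    case False
    show ?thesis
    proof (rule ex1I[of _ y])
      show "f y = y" using assms False by blast
    next
      fix x assume fx: "f x = y"
      show "x = y"
      proof (cases "x \<in> S")
        case True then show ?thesis using assms fx False by metis
      next
        case False then show ?thesis using assms fx by metis
      qed
    qed
  qed
qed

definition ltof :: "(nat \<Rightarrow> nat) \<Rightarrow> nat \<Rightarrow> lt" where
  "ltof s i = (if i < s i then U else if s i < i then D else F)"

fun wd :: "(nat \<Rightarrow> nat) \<Rightarrow> nat \<Rightarrow> lt list" where
  "wd s 0 = []"
| "wd s (Suc k) = ltof s (Suc k) # wd s k"

lemma length_wd[simp]: "length (wd s k) = k"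
  by (induction k) auto

lemma wd_cong: "(\<And>i. 1 \<le> i \<Longrightarrow> i \<le> k \<Longrightarrow> ltof s i = ltof t i) \<Longrightarrow> wd s k = wd t k"
  by (induction k) auto

lemma wd_eq_lt: "wd s k = wd t k \<Longrightarrow> 1 \<le> i \<Longrightarrow> i \<le> k \<Longrightarrow> ltof s i = ltof t i"
proof (induction k)
  case 0 then show ?case by simp
next
  case (Suc k)
  then show ?case by (cases "i = Suc k") auto
qed

lemma PS_facts:
  assumes "PS N s"
  shows "s permutes {1..N}" "\<And>i. 1 \<le> i \<Longrightarrow> i \<le> N \<Longrightarrow> 1 \<le> s i \<and> s i \<le> N"
    "\<And>i. 1 \<le> i \<Longrightarrow> i \<le> N \<Longrightarrow> s (s i) = i"
    "\<And>i. \<not> (1 \<le> i \<and> i \<le> N) \<Longrightarrow> s i = i"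
    "\<And>i j. 1 \<le> i \<Longrightarrow> i < j \<Longrightarrow> j \<le> N \<Longrightarrow> j \<le> s j \<Longrightarrow> s j < s i \<Longrightarrow> False"
proof -
  show p: "s permutes {1..N}" using assms unfolding PS_def by simp
  show "\<And>i. 1 \<le> i \<Longrightarrow> i \<le> N \<Longrightarrow> 1 \<le> s i \<and> s i \<le> N" using perm_in[OF p] by blast
  show "\<And>i. 1 \<le> i \<Longrightarrow> i \<le> N \<Longrightarrow> s (s i) = i" using assms unfolding PS_def by simp
  show "\<And>i. \<not> (1 \<le> i \<and> i \<le> N) \<Longrightarrow> s i = i" using perm_out[OF p] by blast
  show "\<And>i j. 1 \<le> i \<Longrightarrow> i < j \<Longrightarrow> j \<le> N \<Longrightarrow> j \<le> s j \<Longrightarrow> s j < s i \<Longrightarrow> False"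
    using assms unfolding PS_def NC_def by blast
qed

lemma wd_valid:
  assumes ps: "PS N s"
  shows "k \<le> N \<Longrightarrow> ok (wd s k) \<and> ht (wd s k) = card {i \<in> {1..k}. k < s i}"
proof (induction k)
  case 0 then show ?case by simp
next
  case (Suc k)
  note f = PS_facts[OF ps]
  define A where "A = {i \<in> {1..k}. k < s i}"
  define A' where "A' = {i \<in> {1..Suc k}. Suc k < s i}"
  have IH: "ok (wd s k)" "ht (wd s k) = card A" using Suc A_def by auto
  have fA: "finite A" unfolding A_def by simp
  have r: "1 \<le> s (Suc k)" "s (Suc k) \<le> N" "s (s (Suc k)) = Suc k" using f(2,3) Suc.prems by auto
  show ?case
  proof (cases "Suc k < s (Suc k)")
    case True
    have "A' = insert (Suc k) A"
    proof (intro set_eqI iffI)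
      fix i assume "i \<in> A'"
      then show "i \<in> insert (Suc k) A" unfolding A'_def A_def by auto
    next
      fix i assume i: "i \<in> insert (Suc k) A"
      show "i \<in> A'"
      proof (cases "i = Suc k")
        case True then show ?thesis using \<open>Suc k < s (Suc k)\<close> unfolding A'_def by simp
      next
        case False
        then have i1: "1 \<le> i" "i \<le> k" "k < s i" using i unfolding A_def by auto
        have "s i \<noteq> Suc k" using r(3) True i1 f(3)[of i] Suc.prems by force
        then show ?thesis using i1 unfolding A'_def by auto
      qed
    qed
    moreover have "Suc k \<notin> A" unfolding A_def by simp
    ultimately have "card A' = Suc (card A)" using fA by simp
    then show ?thesis using IH True unfolding A'_def by (simp add: ltof_def)
  next
    case False
    show ?thesis
    proof (cases "s (Suc k) < Suc k")
      case True
      define b where "b = s (Suc k)"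
      have bA: "b \<in> A" unfolding A_def b_def using r True by simp
      have "A' = A - {b}"
      proof (intro set_eqI iffI)
        fix i assume i: "i \<in> A'"
        then have "i \<noteq> Suc k" using True unfolding A'_def by auto
        moreover have "i \<noteq> b" using i r unfolding A'_def b_def by auto
        ultimately show "i \<in> A - {b}" using i unfolding A'_def A_def by auto
      next
        fix i assume i: "i \<in> A - {b}"
        then have i1: "1 \<le> i" "i \<le> k" "k < s i" "i \<noteq> b" unfolding A_def by auto
        have "s i \<noteq> Suc k" using i1(4) f(3)[of i] i1 Suc.prems unfolding b_def by force
        then show "i \<in> A'" using i1 unfolding A'_def by auto
      qed
      then have "card A' = card A - 1" using bA fA by simp
      moreover have "1 \<le> card A" using bA fA by (metis One_nat_def Suc_leI card_gt_0_iff empty_iff)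
      ultimately show ?thesis using IH True False unfolding A'_def by (simp add: ltof_def)
    next
      case False2: False
      then have fx: "s (Suc k) = Suc k" using False by simp
      have A0: "A = {}"
      proof (rule ccontr)
        assume "A \<noteq> {}"
        then obtain i where i: "1 \<le> i" "i \<le> k" "k < s i" unfolding A_def by auto
        have "s i \<noteq> Suc k" using fx f(3)[of i] i Suc.prems by force
        then have "Suc k < s i" using i by simp
        then show False using f(5)[of i "Suc k"] i fx Suc.prems by simp
      qed
      have "A' = {}"
      proof (rule ccontr)
        assume "A' \<noteq> {}"
        then obtain i where i: "1 \<le> i" "i \<le> Suc k" "Suc k < s i" unfolding A'_def by auto
        then have "i \<noteq> Suc k" using fx by auto
        then have "i \<in> A" using i unfolding A_def by auto
        then show False using A0 by simp
      qed
      then show ?thesis using IH A0 fx unfolding A'_def by (simp add: ltof_def)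
    qed
  qed
qed

lemma wd_RW: assumes "PS N s" shows "wd s N \<in> RW N 0"
proof -
  have v: "ok (wd s N)" "ht (wd s N) = card {i \<in> {1..N}. N < s i}" using wd_valid[OF assms] by auto
  have "{i \<in> {1..N}. N < s i} = {}" using PS_facts(2)[OF assms] by force
  then show ?thesis using v unfolding RW_def by simp
qed

lemma desc_iff:
  assumes ps: "PS N s" and i: "1 \<le> i" "Suc i \<le> N"
  shows "s (Suc i) < s i \<longleftrightarrow> ltof s i = U \<and> ltof s (Suc i) = D"
proof
  note f = PS_facts[OF ps]
  assume d: "s (Suc i) < s i"
  have a: "i < s i"
  proof (rule ccontr)
    assume "\<not> i < s i"
    then have "s (Suc i) < s i" "s i \<le> i" using d by auto
    have "1 \<le> s (Suc i)" using f(2)[of "Suc i"] i by simp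
    moreover have "s (s i) = i" "s (s (Suc i)) = Suc i" using f(3) i by auto
    ultimately show False using f(5)[of "s (Suc i)" "s i"] \<open>s (Suc i) < s i\<close> \<open>s i \<le> i\<close> i by simp
  qed
  have b: "s (Suc i) < Suc i"
  proof (rule ccontr)
    assume "\<not> s (Suc i) < Suc i"
    then show False using f(5)[of i "Suc i"] d i by simp
  qed
  show "ltof s i = U \<and> ltof s (Suc i) = D" using a b by (simp add: ltof_def)
next
  assume "ltof s i = U \<and> ltof s (Suc i) = D"
  then have "i < s i" "s (Suc i) < Suc i" by (auto simp: ltof_def split: if_splits)
  then show "s (Suc i) < s i" by simp
qed

lemma wt_wd:
  assumes ps: "PS N s"
  shows "k \<le> N \<Longrightarrow> wt x (wd s k) = (\<Prod>i\<in>Des k s. x i)"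
proof (induction k)
  case 0 then show ?case by (simp add: Des_def)
next
  case (Suc k)
  show ?case
  proof (cases k)
    case 0 then show ?thesis by (simp add: Des_def)
  next
    case (Suc m)
    have DS: "Des (Suc k) s = Des k s \<union> (if s (Suc k) < s k then {k} else {})"
      unfolding Des_def using Suc by (auto simp: less_Suc_eq)
    have nk: "k \<notin> Des k s" unfolding Des_def by simp
    have fin: "finite (Des k s)" unfolding Des_def by simp
    have "wt x (wd s (Suc k)) = (if ltof s (Suc k) = D \<and> ltof s k = U then x k else 1) * wt x (wd s k)"
      using Suc by simp
    also have "(ltof s (Suc k) = D \<and> ltof s k = U) \<longleftrightarrow> s (Suc k) < s k"
      using desc_iff[OF ps, of k] Suc \<open>Suc k \<le> N\<close> by auto
    finally show ?thesis using Suc.IH \<open>Suc k \<le> N\<close> nk fin by (simp add: DS)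
  qed
qed

lemma rank_eq:
  assumes ps: "PS N s" and i: "1 \<le> i" "i \<le> N" "i < s i"
  shows "card {j \<in> {1..N}. j < s j \<and> j \<le> i} = card {c \<in> {1..N}. s c < c \<and> c \<le> s i}"
proof -
  note f = PS_facts[OF ps]
  have inj: "inj_on s {j \<in> {1..N}. j < s j \<and> j \<le> i}"
    using permutes_inj[OF f(1)] by (simp add: inj_on_def inj_def)
  have img: "s ` {j \<in> {1..N}. j < s j \<and> j \<le> i} = {c \<in> {1..N}. s c < c \<and> c \<le> s i}"
  proof (intro set_eqI iffI)
    fix c assume "c \<in> s ` {j \<in> {1..N}. j < s j \<and> j \<le> i}"
    then obtain j where j: "c = s j" "1 \<le> j" "j \<le> N" "j < s j" "j \<le> i" by auto
    have r: "1 \<le> s j" "s j \<le> N" "s (s j) = j" using f(2,3) j by auto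
    have "s j \<le> s i"
    proof (rule ccontr)
      assume "\<not> s j \<le> s i"
      then have "j < i" using j(5) by (cases "j = i") auto
      then show False using f(5)[of j i] j i \<open>\<not> s j \<le> s i\<close> by simp
    qed
    then show "c \<in> {c \<in> {1..N}. s c < c \<and> c \<le> s i}" using j r by simp
  next
    fix c assume c: "c \<in> {c \<in> {1..N}. s c < c \<and> c \<le> s i}"
    then have c1: "1 \<le> c" "c \<le> N" "s c < c" "c \<le> s i" by auto
    have r: "1 \<le> s c" "s c \<le> N" "s (s c) = c" using f(2,3) c1 by auto
    have "s c \<le> i"
    proof (rule ccontr)
      assume a: "\<not> s c \<le> i"
      have "c \<noteq> s i" using a f(3)[of i] i by auto
      then have "c < s i" using c1 by simp
      then show False using f(5)[of i "s c"] a i r c1 by simp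
    qed
    then show "c \<in> s ` {j \<in> {1..N}. j < s j \<and> j \<le> i}" using r c1
      by (intro image_eqI[of c s "s c"]) auto
  qed
  show ?thesis using bij_betw_same_card[of s] inj img unfolding bij_betw_def by blast
qed

lemma wd_inj:
  assumes ps: "PS N s" and pt: "PS N t" and w: "wd s N = wd t N"
  shows "s = t"
proof -
  note fs = PS_facts[OF ps] and ft = PS_facts[OF pt]
  have L: "ltof s i = ltof t i" if "1 \<le> i" "i \<le> N" for i using wd_eq_lt[OF w] that by blast
  have O: "i < s i \<longleftrightarrow> i < t i" if "1 \<le> i" "i \<le> N" for i
    using L[OF that] by (auto simp: ltof_def split: if_splits)
  have C: "s i < i \<longleftrightarrow> t i < i" if "1 \<le> i" "i \<le> N" for i
    using L[OF that] by (auto simp: ltof_def split: if_splits)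
  define Cs where "Cs = {c \<in> {1..N}. s c < c}"
  have Oeq: "{j \<in> {1..N}. j < s j \<and> j \<le> i} = {j \<in> {1..N}. j < t j \<and> j \<le> i}" for i
    using O by auto
  have Ceq: "{c \<in> {1..N}. t c < c \<and> c \<le> y} = {c \<in> Cs. c \<le> y}" for y
    using C unfolding Cs_def by auto
  have Ceq': "{c \<in> {1..N}. s c < c \<and> c \<le> y} = {c \<in> Cs. c \<le> y}" for y
    unfolding Cs_def by auto
  have op: "s i = t i" if i: "1 \<le> i" "i \<le> N" "i < s i" for i
  proof -
    have i': "i < t i" using O i by blast
    have rk: "card {c \<in> Cs. c \<le> s i} = card {c \<in> Cs. c \<le> t i}"
      using rank_eq[OF ps i] rank_eq[OF pt i(1,2) i'] Oeq[of i] Ceq Ceq' by simp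
    have sC: "s i \<in> Cs" using fs(2,3) i unfolding Cs_def by auto
    have tC: "t i \<in> Cs" using ft(2,3) i i' C[of "t i"] unfolding Cs_def by auto
    have fin: "finite {c \<in> Cs. c \<le> y}" for y unfolding Cs_def by simp
    show ?thesis
    proof (rule ccontr)
      assume ne: "s i \<noteq> t i"
      show False
      proof (cases "s i < t i")
        case True
        have "t i \<in> {c \<in> Cs. c \<le> t i}" "t i \<notin> {c \<in> Cs. c \<le> s i}" using True tC by auto
        moreover have "{c \<in> Cs. c \<le> s i} \<subseteq> {c \<in> Cs. c \<le> t i}" using True by auto
        ultimately have "{c \<in> Cs. c \<le> s i} \<subset> {c \<in> Cs. c \<le> t i}" by blast
        then have "card {c \<in> Cs. c \<le> s i} < card {c \<in> Cs. c \<le> t i}" by (rule psubset_card_mono[OF fin])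
        then show False using rk by simp
      next
        case False
        then have "t i < s i" using ne by simp
        have "s i \<in> {c \<in> Cs. c \<le> s i}" "s i \<notin> {c \<in> Cs. c \<le> t i}" using \<open>t i < s i\<close> sC by auto
        moreover have "{c \<in> Cs. c \<le> t i} \<subseteq> {c \<in> Cs. c \<le> s i}" using \<open>t i < s i\<close> by auto
        ultimately have "{c \<in> Cs. c \<le> t i} \<subset> {c \<in> Cs. c \<le> s i}" by blast
        then have "card {c \<in> Cs. c \<le> t i} < card {c \<in> Cs. c \<le> s i}" by (rule psubset_card_mono[OF fin])
        then show False using rk by simp
      qed
    qed
  qed
  show ?thesis
  proof
    fix i
    show "s i = t i"
    proof (cases "1 \<le> i \<and> i \<le> N")
      case False then show ?thesis using fs(4) ft(4) by simp
    next
      case True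
      show ?thesis
      proof (cases "i < s i")
        case True then show ?thesis using op \<open>1 \<le> i \<and> i \<le> N\<close> by blast
      next
        case False
        show ?thesis
        proof (cases "s i < i")
          case True
          define ob where "ob = s i"
          have ob: "1 \<le> ob" "ob \<le> N" "s ob = i" "ob < s ob" using fs(2,3) \<open>1 \<le> i \<and> i \<le> N\<close> True unfolding ob_def by auto
          have "t ob = i" using op[OF ob(1,2,4)] ob(3) by simp
          then have "t i = ob" using ft(3)[OF ob(1,2)] by simp
          then show ?thesis unfolding ob_def by simp
        next
          case False2: False
          then have "s i = i" using False by simp
          moreover have "t i = i" using O[of i] C[of i] \<open>1 \<le> i \<and> i \<le> N\<close> False False2 by auto
          ultimately show ?thesis by simp
        qed
      qed
    qed
  qed
qed

lemma PS_0: "PS 0 id"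
  unfolding PS_def NC_def by (auto simp: permutes_id)

lemma PS_ext:
  assumes ps: "PS n s"
  shows "PS (Suc n) s"
proof -
  note f = PS_facts[OF ps]
  have p: "s permutes {1..Suc n}" by (rule permutes_subset[OF f(1)]) auto
  have sn: "s (Suc n) = Suc n" using f(4) by simp
  have inv: "\<forall>i\<in>{1..Suc n}. s (s i) = i"
  proof
    fix i assume "i \<in> {1..Suc n}"
    then show "s (s i) = i" using f(3)[of i] sn by (cases "i = Suc n") auto
  qed
  have nc: "NC (Suc n) s" unfolding NC_def
  proof (intro allI impI)
    fix i j assume h: "1 \<le> i" "i < j" "j \<le> Suc n" "j \<le> s j" "s j < s i"
    show False
    proof (cases "j = Suc n")
      case True
      then show False using h f(2)[of i] sn by simp
    next
      case False
      then show False using h f(5)[of i j] by simp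
    qed
  qed
  show ?thesis unfolding PS_def using p inv nc by simp
qed

lemma wd_surj:
  "ok ws \<Longrightarrow> \<exists>s. PS (length ws + ht ws) s \<and> wd s (length ws) = ws
      \<and> (\<forall>i. length ws < i \<and> i \<le> length ws + ht ws \<longrightarrow> s i < i)"
proof (induction ws)
  case Nil
  show ?case using PS_0 by auto
next
  case (Cons c ws)
  define n where "n = length ws"
  define M where "M = n + ht ws"
  have okws: "ok ws" using Cons.prems by (cases c) auto
  obtain s where ps: "PS M s" and w: "wd s n = ws" and tl: "\<And>i. n < i \<Longrightarrow> i \<le> M \<Longrightarrow> s i < i"
    using Cons.IH[OF okws] unfolding n_def M_def by blast
  note f = PS_facts[OF ps]
  show ?case
  proof (cases c)
    case F
    then have h0: "ht ws = 0" using Cons.prems by simp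
    have "PS (Suc n) s" using PS_ext[OF ps] h0 unfolding M_def by simp
    moreover have "ltof s (Suc n) = F" using f(4)[of "Suc n"] h0 unfolding M_def by (simp add: ltof_def)
    ultimately show ?thesis using F w h0 unfolding n_def by auto
  next
    case D
    then have h1: "1 \<le> ht ws" using Cons.prems by simp
    have e: "length (c # ws) + ht (c # ws) = M" using D h1 unfolding M_def n_def by simp
    have "s (Suc n) < Suc n" using tl[of "Suc n"] h1 unfolding M_def by simp
    then have "ltof s (Suc n) = D" by (simp add: ltof_def)
    then have "wd s (length (c # ws)) = c # ws" using w D unfolding n_def by simp
    moreover have "\<forall>i. length (c # ws) < i \<and> i \<le> length (c # ws) + ht (c # ws) \<longrightarrow> s i < i"
      using tl e unfolding n_def by simp
    ultimately show ?thesis using ps e by metis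
  next
    case U
    have e: "length (c # ws) + ht (c # ws) = M + 2" using U unfolding M_def n_def by simp
    have fT: "1 \<le> s p \<and> s p \<le> n \<and> s (s p) = p" if p: "n < p" "p \<le> M" for p
    proof -
      have a: "1 \<le> s p" "s p \<le> M" "s (s p) = p" using f(2,3)[of p] p by auto
      have b: "s p < p" using tl p by simp
      have "s p \<le> n"
      proof (rule ccontr)
        assume "\<not> s p \<le> n"
        then have "s (s p) < s p" using tl[of "s p"] a by simp
        then show False using a b by simp
      qed
      then show ?thesis using a by simp
    qed
    define sh where "sh y = (if y \<le> n then y else Suc y)" for y
    define t where "t j = (if 1 \<le> j \<and> j \<le> n then sh (s j) else if j = Suc n then M + 2
        else if n + 2 \<le> j \<and> j \<le> M + 1 then s (j - 1) else if j = M + 2 then Suc n else j)" for j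
    have tL: "t j = sh (s j)" if "1 \<le> j" "j \<le> n" for j using that unfolding t_def by simp
    have tP: "t (Suc n) = M + 2" unfolding t_def by simp
    have tT: "t j = s (j - 1)" if "n + 2 \<le> j" "j \<le> M + 1" for j using that unfolding t_def by simp
    have tZ: "t (M + 2) = Suc n" unfolding t_def M_def by simp
    have tO: "t j = j" if "\<not> (1 \<le> j \<and> j \<le> M + 2)" for j using that unfolding t_def M_def by auto
    have nM: "n \<le> M" unfolding M_def by simp
    have fL: "1 \<le> s j \<and> s j \<le> M \<and> s (s j) = j" if "1 \<le> j" "j \<le> n" for j
      using f(2,3)[of j] that nM by auto
    have cases: "(1 \<le> j \<and> j \<le> n) \<or> j = Suc n \<or> (n + 2 \<le> j \<and> j \<le> M + 1) \<or> j = M + 2"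
      if "1 \<le> j" "j \<le> M + 2" for j using that by auto
    have range: "1 \<le> t j \<and> t j \<le> M + 2" if j: "1 \<le> j" "j \<le> M + 2" for j
      using cases[OF j]
    proof (elim disjE)
      assume a: "1 \<le> j \<and> j \<le> n"
      then show ?thesis using tL fL[of j] unfolding sh_def by auto
    next
      assume "j = Suc n" then show ?thesis using tP by simp
    next
      assume a: "n + 2 \<le> j \<and> j \<le> M + 1"
      then have "n < j - 1" "j - 1 \<le> M" by auto
      then show ?thesis using tT[of j] fT[of "j - 1"] a by auto
    next
      assume "j = M + 2" then show ?thesis using tZ nM by simp
    qed
    have inv: "t (t j) = j" if j: "1 \<le> j" "j \<le> M + 2" for j
      using cases[OF j]
    proof (elim disjE)
      assume a: "1 \<le> j \<and> j \<le> n"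
      show ?thesis
      proof (cases "s j \<le> n")
        case True
        then show ?thesis using a tL[of j] tL[of "s j"] fL[of j] unfolding sh_def by auto
      next
        case False
        then have "t j = Suc (s j)" using a tL[of j] unfolding sh_def by simp
        moreover have "t (Suc (s j)) = s (s j)" using tT[of "Suc (s j)"] False fL[of j] a by simp
        ultimately show ?thesis using fL[of j] a by simp
      qed
    next
      assume "j = Suc n" then show ?thesis using tP tZ by simp
    next
      assume a: "n + 2 \<le> j \<and> j \<le> M + 1"
      then have b: "1 \<le> s (j - 1) \<and> s (j - 1) \<le> n \<and> s (s (j - 1)) = j - 1" using fT[of "j - 1"] by auto
      have "t j = s (j - 1)" using tT a by simp
      moreover have "t (s (j - 1)) = sh (j - 1)" using tL[of "s (j - 1)"] b by simp
      ultimately show ?thesis using a unfolding sh_def by auto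
    next
      assume "j = M + 2" then show ?thesis using tP tZ by simp
    qed
    have perm: "t permutes {1..M + 2}"
      by (rule perm_of_inv) (use tO range inv in auto)
    have nc: "NC (M + 2) t" unfolding NC_def
    proof (intro allI impI)
      fix i j assume h: "1 \<le> i" "i < j" "j \<le> M + 2" "j \<le> t j" "t j < t i"
      have ri: "t i \<le> M + 2" using range[of i] h by simp
      have cj: "(1 \<le> j \<and> j \<le> n) \<or> j = Suc n \<or> (n + 2 \<le> j \<and> j \<le> M + 1) \<or> j = M + 2"
        using cases[of j] h by simp
      show False using cj
      proof (elim disjE)
        assume a: "1 \<le> j \<and> j \<le> n"
        then have ia: "1 \<le> i \<and> i \<le> n" using h by simp
        have tj: "t j = sh (s j)" "t i = sh (s i)" using tL a ia by auto
        have "j \<le> s j" using h(4) tj(1) a unfolding sh_def by (auto split: if_splits)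
        moreover have "s j < s i" using h(5) tj unfolding sh_def by (auto split: if_splits)
        ultimately show False using f(5)[of i j] h a nM by simp
      next
        assume "j = Suc n" then show False using h tP ri by simp
      next
        assume a: "n + 2 \<le> j \<and> j \<le> M + 1"
        then have "n < j - 1" "j - 1 \<le> M" by auto
        then have "s (j - 1) \<le> n" using fT[of "j - 1"] by simp
        then show False using h tT[of j] a by simp
      next
        assume "j = M + 2" then show False using h tZ nM by simp
      qed
    qed
    have PSt: "PS (M + 2) t" unfolding PS_def using perm inv nc by auto
    have lts: "ltof t i = ltof s i" if "1 \<le> i" "i \<le> n" for i
      using tL[OF that] that unfolding sh_def ltof_def by auto
    have "wd t n = ws" using wd_cong[of n t s] lts w by auto
    moreover have "ltof t (Suc n) = U" using tP unfolding ltof_def M_def by simp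
    ultimately have W: "wd t (length (c # ws)) = c # ws" using U unfolding n_def by simp
    have T: "\<forall>i. length (c # ws) < i \<and> i \<le> length (c # ws) + ht (c # ws) \<longrightarrow> t i < i"
    proof (intro allI impI)
      fix i assume a: "length (c # ws) < i \<and> i \<le> length (c # ws) + ht (c # ws)"
      then have a': "Suc n < i" "i \<le> M + 2" using e unfolding n_def by auto
      show "t i < i"
      proof (cases "i = M + 2")
        case True then show ?thesis using tZ a' by simp
      next
        case False
        then have "n < i - 1" "i - 1 \<le> M" "n + 2 \<le> i" "i \<le> M + 1" using a' by auto
        then show ?thesis using tT[of i] fT[of "i - 1"] by simp
      qed
    qed
    show ?thesis using PSt W T e by metis
  qed
qed

lemma wd_bij: "bij_betw (\<lambda>s. wd s n) {s. PS n s} (RW n 0)"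
  unfolding bij_betw_def
proof
  show "inj_on (\<lambda>s. wd s n) {s. PS n s}" using wd_inj unfolding inj_on_def by blast
  show "(\<lambda>s. wd s n) ` {s. PS n s} = RW n 0"
  proof (intro set_eqI iffI)
    fix ws assume "ws \<in> (\<lambda>s. wd s n) ` {s. PS n s}"
    then show "ws \<in> RW n 0" using wd_RW by blast
  next
    fix ws assume a: "ws \<in> RW n 0"
    then have "ok ws" "length ws = n" "ht ws = 0" unfolding RW_def by auto
    then obtain s where "PS n s" "wd s n = ws" using wd_surj[of ws] by auto
    then show "ws \<in> (\<lambda>s. wd s n) ` {s. PS n s}" by blast
  qed
qed

lemma PS_sum: "(\<Sum>s\<in>{s. PS n s}. \<Prod>i\<in>Des n s. x i) = MU x n 0 + MN x n 0"
proof -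
  have "(\<Sum>s\<in>{s. PS n s}. \<Prod>i\<in>Des n s. x i) = (\<Sum>s\<in>{s. PS n s}. wt x (wd s n))"
    by (rule sum.cong) (auto simp: wt_wd)
  also have "\<dots> = (\<Sum>ws\<in>RW n 0. wt x ws)"
    by (rule sum.reindex_bij_betw[OF wd_bij])
  finally show ?thesis using RW_sum0 by simp
qed



definition ext :: "nat \<Rightarrow> (nat \<Rightarrow> nat) \<Rightarrow> nat \<Rightarrow> nat" where
  "ext n s i = (if 1 \<le> i \<and> i \<le> n then s i
     else if n + 2 \<le> i \<and> i \<le> 2 * n + 1 then 2 * n + 2 - s (2 * n + 2 - i) else i)"

definition res :: "nat \<Rightarrow> (nat \<Rightarrow> nat) \<Rightarrow> nat \<Rightarrow> nat" where
  "res n p i = (if 1 \<le> i \<and> i \<le> n then p i else i)"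

lemma IC_iff: "p \<in> ICinv321 m \<longleftrightarrow> PS m p \<and> centrosymmetric m p"
  unfolding ICinv321_def using PS_iff by blast

lemma ext_props:
  assumes ps: "PS n s"
  shows "PS (2 * n + 1) (ext n s) \<and> centrosymmetric (2 * n + 1) (ext n s)"
proof -
  note f = PS_facts[OF ps]
  let ?p = "ext n s"
  have eL: "?p i = s i" if "1 \<le> i" "i \<le> n" for i using that unfolding ext_def by simp
  have eM: "?p (n + 1) = n + 1" unfolding ext_def by simp
  have eR: "?p i = 2 * n + 2 - s (2 * n + 2 - i)" if "n + 2 \<le> i" "i \<le> 2 * n + 1" for i
    using that unfolding ext_def by simp
  have eO: "?p i = i" if "\<not> (1 \<le> i \<and> i \<le> 2 * n + 1)" for i using that unfolding ext_def by auto
  have cs: "(1 \<le> i \<and> i \<le> n) \<or> i = n + 1 \<or> (n + 2 \<le> i \<and> i \<le> 2 * n + 1)"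
    if "1 \<le> i" "i \<le> 2 * n + 1" for i using that by auto
  have fR: "1 \<le> s (2 * n + 2 - i) \<and> s (2 * n + 2 - i) \<le> n \<and> s (s (2 * n + 2 - i)) = 2 * n + 2 - i"
    if "n + 2 \<le> i" "i \<le> 2 * n + 1" for i using f(2,3)[of "2 * n + 2 - i"] that by auto
  have range: "1 \<le> ?p i \<and> ?p i \<le> 2 * n + 1 \<and> (i \<le> n \<longrightarrow> ?p i \<le> n) \<and> (n + 2 \<le> i \<longrightarrow> n + 2 \<le> ?p i)"
    if i: "1 \<le> i" "i \<le> 2 * n + 1" for i
    using cs[OF i]
  proof (elim disjE)
    assume a: "1 \<le> i \<and> i \<le> n" then show ?thesis using eL[of i] f(2)[of i] by auto
  next
    assume "i = n + 1" then show ?thesis using eM by simp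
  next
    assume a: "n + 2 \<le> i \<and> i \<le> 2 * n + 1" then show ?thesis using eR[of i] fR[of i] by auto
  qed
  have inv: "?p (?p i) = i" if i: "1 \<le> i" "i \<le> 2 * n + 1" for i
    using cs[OF i]
  proof (elim disjE)
    assume a: "1 \<le> i \<and> i \<le> n"
    then show ?thesis using eL[of i] eL[of "s i"] f(2,3)[of i] by auto
  next
    assume "i = n + 1" then show ?thesis using eM by simp
  next
    assume a: "n + 2 \<le> i \<and> i \<le> 2 * n + 1"
    define y where "y = s (2 * n + 2 - i)"
    have y: "1 \<le> y" "y \<le> n" "s y = 2 * n + 2 - i" using fR[of i] a unfolding y_def by auto
    have "?p i = 2 * n + 2 - y" using eR[of i] a unfolding y_def by simp
    moreover have "?p (2 * n + 2 - y) = 2 * n + 2 - s y" using eR[of "2 * n + 2 - y"] y by simp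
    ultimately show ?thesis using y a by simp
  qed
  have perm: "?p permutes {1..2 * n + 1}"
    by (rule perm_of_inv) (use eO range inv in auto)
  have nc: "NC (2 * n + 1) ?p" unfolding NC_def
  proof (intro allI impI)
    fix i j assume h: "1 \<le> i" "i < j" "j \<le> 2 * n + 1" "j \<le> ?p j" "?p j < ?p i"
    have ci: "(1 \<le> i \<and> i \<le> n) \<or> i = n + 1 \<or> (n + 2 \<le> i \<and> i \<le> 2 * n + 1)" using cs[of i] h by simp
    show False using ci
    proof (elim disjE)
      assume a: "1 \<le> i \<and> i \<le> n"
      then have "?p i \<le> n" using range[of i] h by simp
      then have jn: "j \<le> n" using h by simp
      then show False using f(5)[of i j] h eL[of i] eL[of j] a by simp
    next
      assume a: "i = n + 1"
      then show False using range[of j] h eM by simp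
    next
      assume a: "n + 2 \<le> i \<and> i \<le> 2 * n + 1"
      define i' where "i' = 2 * n + 2 - i"
      define j' where "j' = 2 * n + 2 - j"
      have ij: "1 \<le> j'" "j' < i'" "i' \<le> n" using a h unfolding i'_def j'_def by auto
      have pi: "?p i = 2 * n + 2 - s i'" using eR[of i] a unfolding i'_def by simp
      have pj: "?p j = 2 * n + 2 - s j'" using eR[of j] a h unfolding j'_def by simp
      have si: "1 \<le> s i'" "s i' \<le> n" "s (s i') = i'" using f(2,3)[of i'] ij by auto
      have sj: "1 \<le> s j'" "s j' \<le> n" "s (s j') = j'" using f(2,3)[of j'] ij by auto
      have "j \<le> 2 * n + 2 - s j'" using h(4) pj by simp
      then have c1: "s j' \<le> j'" using sj(2) unfolding j'_def by arith
      have c2: "s i' < s j'" using h(5) pi pj si sj by simp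
      show False using f(5)[of "s i'" "s j'"] si sj c1 c2 ij by simp
    qed
  qed
  have cen: "centrosymmetric (2 * n + 1) ?p" unfolding centrosymmetric_def
  proof
    fix i assume "i \<in> {1..2 * n + 1}"
    then have i: "1 \<le> i" "i \<le> 2 * n + 1" by auto
    show "?p i + ?p (2 * n + 1 + 1 - i) = 2 * n + 1 + 1"
      using cs[OF i]
    proof (elim disjE)
      assume a: "1 \<le> i \<and> i \<le> n"
      then show ?thesis using eL[of i] eR[of "2 * n + 1 + 1 - i"] f(2)[of i] by auto
    next
      assume "i = n + 1" then show ?thesis using eM by simp
    next
      assume a: "n + 2 \<le> i \<and> i \<le> 2 * n + 1"
      then show ?thesis using eR[of i] eL[of "2 * n + 1 + 1 - i"] fR[of i] by auto
    qed
  qed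
  show ?thesis unfolding PS_def using perm inv nc cen by auto
qed

lemma res_ext: "PS n s \<Longrightarrow> res n (ext n s) = s"
  using PS_facts(4) unfolding res_def ext_def by fastforce

lemma ext_res:
  assumes ps: "PS (2 * n + 1) p" and cen: "centrosymmetric (2 * n + 1) p"
  shows "PS n (res n p) \<and> ext n (res n p) = p"
proof -
  note f = PS_facts[OF ps]
  have cen': "p i + p (2 * n + 1 + 1 - i) = 2 * n + 1 + 1" if "1 \<le> i" "i \<le> 2 * n + 1" for i
    using cen that unfolding centrosymmetric_def by simp
  have "p (n + 1) + p (2 * n + 1 + 1 - (n + 1)) = 2 * n + 1 + 1" by (rule cen') auto
  moreover have "2 * n + 1 + 1 - (n + 1) = n + 1" by simp
  ultimately have pm: "p (n + 1) = n + 1" by simp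
  have pL: "1 \<le> p i \<and> p i \<le> n" if i: "1 \<le> i" "i \<le> n" for i
  proof -
    have r: "1 \<le> p i" "p i \<le> 2 * n + 1" "p (p i) = i" using f(2,3)[of i] i by auto
    have "p i \<noteq> n + 1" using r(3) pm i by auto
    moreover have "\<not> n + 1 < p i" using f(5)[of i "n + 1"] pm i by auto
    ultimately show ?thesis using r by simp
  qed
  let ?r = "res n p"
  have perm: "?r permutes {1..n}"
    by (rule perm_of_inv) (use pL f(3) in \<open>auto simp: res_def\<close>)
  have inv: "\<forall>i\<in>{1..n}. ?r (?r i) = i" using pL f(3) by (auto simp: res_def)
  have nc: "NC n ?r" unfolding NC_def
  proof (intro allI impI)
    fix i j assume h: "1 \<le> i" "i < j" "j \<le> n" "j \<le> ?r j" "?r j < ?r i"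
    then show False using f(5)[of i j] by (auto simp: res_def)
  qed
  have PSr: "PS n ?r" unfolding PS_def using perm inv nc by simp
  have "ext n ?r i = p i" for i
  proof (cases "1 \<le> i \<and> i \<le> n")
    case True then show ?thesis unfolding ext_def res_def by simp
  next
    case False
    show ?thesis
    proof (cases "i = n + 1")
      case True then show ?thesis using pm False unfolding ext_def by simp
    next
      case False2: False
      show ?thesis
      proof (cases "n + 2 \<le> i \<and> i \<le> 2 * n + 1")
        case True
        define i' where "i' = 2 * n + 2 - i"
        have i': "1 \<le> i'" "i' \<le> n" "2 * n + 1 + 1 - i' = i" using True unfolding i'_def by auto
        have "p i' + p (2 * n + 1 + 1 - i') = 2 * n + 1 + 1" by (rule cen') (use i' in auto)
        then have "p i' + p i = 2 * n + 2" using i'(3) by simp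
        then show ?thesis using True False i' unfolding ext_def res_def i'_def by auto
      next
        case False3: False
        then have "\<not> (1 \<le> i \<and> i \<le> 2 * n + 1)" using False False2 by auto
        then show ?thesis using f(4)[of i] False False2 False3 unfolding ext_def by auto
      qed
    qed
  qed
  then show ?thesis using PSr by auto
qed

lemma ext_bij: "bij_betw (ext n) {s. PS n s} (ICinv321 (2 * n + 1))"
  unfolding bij_betw_def
proof
  show "inj_on (ext n) {s. PS n s}" unfolding inj_on_def
  proof (intro ballI impI)
    fix s t assume A: "s \<in> {s. PS n s}" "t \<in> {s. PS n s}" and E: "ext n s = ext n t"
    have "s = res n (ext n s)" using A(1) res_ext by simp
    also have "\<dots> = res n (ext n t)" using E by simp
    also have "\<dots> = t" using A(2) res_ext by simp
    finally show "s = t" .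
  qed
  show "ext n ` {s. PS n s} = ICinv321 (2 * n + 1)"
  proof (intro set_eqI iffI)
    fix p assume "p \<in> ext n ` {s. PS n s}"
    then obtain s where s: "PS n s" "p = ext n s" by blast
    then show "p \<in> ICinv321 (2 * n + 1)" using ext_props[OF s(1)] unfolding IC_iff by simp
  next
    fix p assume "p \<in> ICinv321 (2 * n + 1)"
    then have "PS (2 * n + 1) p" "centrosymmetric (2 * n + 1) p" using IC_iff by auto
    then have a: "PS n (res n p)" "ext n (res n p) = p" using ext_res by auto
    show "p \<in> ext n ` {s. PS n s}" by (rule image_eqI[of p "ext n" "res n p"]) (use a in auto)
  qed
qed

lemma Des_ext:
  assumes ps: "PS n s"
  shows "Des (2 * n + 1) (ext n s) = Des n s \<union> (\<lambda>i. 2 * n + 1 - i) ` Des n s"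
proof -
  note f = PS_facts[OF ps]
  let ?p = "ext n s"
  have eL: "?p i = s i" if "1 \<le> i" "i \<le> n" for i using that unfolding ext_def by simp
  have eM: "?p (n + 1) = n + 1" unfolding ext_def by simp
  have eR: "?p i = 2 * n + 2 - s (2 * n + 2 - i)" if "n + 2 \<le> i" "i \<le> 2 * n + 1" for i
    using that unfolding ext_def by simp
  have DL: "x \<in> Des (2 * n + 1) ?p \<longleftrightarrow> x \<in> Des n s" if "x < n" for x
    using that eL[of x] eL[of "Suc x"] unfolding Des_def by auto
  have DN: "x \<notin> Des (2 * n + 1) ?p" if "x = n \<or> x = n + 1" for x
  proof
    assume a: "x \<in> Des (2 * n + 1) ?p"
    then have x1: "1 \<le> x" "x < 2 * n + 1" "?p (Suc x) < ?p x" unfolding Des_def by auto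
    show False using that
    proof
      assume "x = n" then show False using x1 eL[of n] f(2)[of n] eM by simp
    next
      assume xn: "x = n + 1"
      then have "?p (Suc x) = 2 * n + 2 - s (2 * n + 2 - Suc x)" using eR[of "Suc x"] x1 by simp
      moreover have "s (2 * n + 2 - Suc x) \<le> n" using f(2)[of "2 * n + 2 - Suc x"] x1 xn by auto
      ultimately show False using x1 xn eM by simp
    qed
  qed
  have DR: "x \<in> Des (2 * n + 1) ?p \<longleftrightarrow> 2 * n + 1 - x \<in> Des n s" if x: "n + 2 \<le> x" "x \<le> 2 * n + 1" for x
  proof -
    define x' where "x' = 2 * n + 1 - x"
    have x'1: "x' < n" using x unfolding x'_def by simp
    show ?thesis
    proof (cases "x = 2 * n + 1")
      case True then show ?thesis unfolding Des_def x'_def by simp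
    next
      case False
      then have x'p: "1 \<le> x'" "2 * n + 2 - x = Suc x'" "2 * n + 2 - Suc x = x'" using x unfolding x'_def by auto
      have px: "?p x = 2 * n + 2 - s (Suc x')" using eR[of x] x x'p by simp
      have px1: "?p (Suc x) = 2 * n + 2 - s x'" using eR[of "Suc x"] x False x'p by simp
      have b: "s x' \<le> n" "s (Suc x') \<le> n" using f(2)[of x'] f(2)[of "Suc x'"] x'p x'1 by auto
      have "x \<in> Des (2 * n + 1) ?p \<longleftrightarrow> s (Suc x') < s x'"
        using px px1 b x False unfolding Des_def by auto
      also have "\<dots> \<longleftrightarrow> x' \<in> Des n s" using x'p x'1 unfolding Des_def by auto
      finally show ?thesis unfolding x'_def .
    qed
  qed
  show ?thesis
  proof (intro set_eqI iffI)
    fix x assume a: "x \<in> Des (2 * n + 1) ?p"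
    then have x: "1 \<le> x" "x < 2 * n + 1" unfolding Des_def by auto
    consider "x < n" | "x = n \<or> x = n + 1" | "n + 2 \<le> x" by linarith
    then show "x \<in> Des n s \<union> (\<lambda>i. 2 * n + 1 - i) ` Des n s"
    proof cases
      case 1 then show ?thesis using DL a by auto
    next
      case 2 then show ?thesis using DN a by auto
    next
      case 3
      then have "2 * n + 1 - x \<in> Des n s" using DR[of x] a x by simp
      moreover have "x = 2 * n + 1 - (2 * n + 1 - x)" using x by simp
      ultimately show ?thesis by blast
    qed
  next
    fix x assume "x \<in> Des n s \<union> (\<lambda>i. 2 * n + 1 - i) ` Des n s"
    then show "x \<in> Des (2 * n + 1) ?p"
    proof
      assume "x \<in> Des n s"
      then show ?thesis using DL[of x] unfolding Des_def by auto
    next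
      assume "x \<in> (\<lambda>i. 2 * n + 1 - i) ` Des n s"
      then obtain y where y: "y \<in> Des n s" "x = 2 * n + 1 - y" by auto
      then have "1 \<le> y" "y < n" unfolding Des_def by auto
      then have "n + 2 \<le> x" "x \<le> 2 * n + 1" "2 * n + 1 - x = y" using y by auto
      then show ?thesis using DR[of x] y by simp
    qed
  qed
qed

lemma Desplus_ext:
  assumes ps: "PS n s"
  shows "Des_plus (2 * n + 1) (ext n s) = Des n s"
proof -
  have a: "Des n s \<subseteq> {1..n}" unfolding Des_def by auto
  have b: "(\<lambda>i. 2 * n + 1 - i) ` Des n s \<inter> {1..n} = {}" unfolding Des_def by auto
  have "(2 * n + 1) div 2 = n" by simp
  then show ?thesis unfolding Des_plus_def Des_ext[OF ps] using a b by auto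
qed

lemma des_ext:
  assumes ps: "PS n s"
  shows "des (2 * n + 1) (ext n s) = 2 * card (Des n s)"
proof -
  have fin: "finite (Des n s)" unfolding Des_def by simp
  have inj: "inj_on (\<lambda>i. 2 * n + 1 - i) (Des n s)" unfolding inj_on_def Des_def by auto
  have dj: "Des n s \<inter> (\<lambda>i. 2 * n + 1 - i) ` Des n s = {}" unfolding Des_def by auto
  have "card (Des n s \<union> (\<lambda>i. 2 * n + 1 - i) ` Des n s) = card (Des n s) + card ((\<lambda>i. 2 * n + 1 - i) ` Des n s)"
    using card_Un_disjoint[OF fin _ dj] fin by simp
  also have "card ((\<lambda>i. 2 * n + 1 - i) ` Des n s) = card (Des n s)" using card_image[OF inj] .
  finally show ?thesis unfolding des_def Des_ext[OF ps] by simp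
qed



lemma IC_reindex: "(\<Sum>p\<in>ICinv321 (2 * n + 1). g p) = (\<Sum>s\<in>{s. PS n s}. g (ext n s))"
  by (rule sum.reindex_bij_betw[OF ext_bij, symmetric])

lemma gen_sum:
  assumes sym: "\<And>c. BB x c (Suc c) = BB x (Suc c) c"
  shows "(\<Sum>s\<in>{s. PS n s}. \<Prod>i\<in>Des n s. x i) = BB x (n - n div 2) (n div 2)"
proof -
  have "MU x n 0 = 0 \<and> MN x n 0 = BB x (n - n div 2) (n div 2)" using MUMN_closed[OF sym, where n=n] by blast
  then show ?thesis using PS_sum[where n=n and x=x] by simp
qed

lemma sym_des: "BB (\<lambda>_. t) c (Suc c) = BB (\<lambda>_. t) (Suc c) c"
  using BB_des TT_sym by metis

lemma TT_target: "TT t a b = (\<Sum>k=0..b. of_nat (a choose k) * of_nat (b choose k) * t ^ k)"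
proof -
  have "TT t a b = (\<Sum>k\<in>{0..b}. fT t a b k)"
    unfolding TT_def
    by (rule sum.mono_neutral_right) (auto simp: fT_def binomial_eq_0)
  then show ?thesis unfolding fT_def by simp
qed

theorem mainTheorem4:
  fixes q :: "'a::comm_ring_1" and n :: nat
  shows "(\<Sum>\<pi>\<in>ICinv321 (2*n+1). q ^ des_plus (2*n+1) \<pi>)
           = (\<Sum>k=0..n div 2. of_nat (((n+1) div 2) choose k) * of_nat ((n div 2) choose k) * q ^ k)
       \<and> (\<Sum>\<pi>\<in>ICinv321 (2*n+1). q ^ maj_plus (2*n+1) \<pi>) = qbinom q n (n div 2)
       \<and> (\<Sum>\<pi>\<in>ICinv321 (2*n+1). q ^ des (2*n+1) \<pi>)
           = (\<Sum>k=0..n div 2. of_nat (((n+1) div 2) choose k) * of_nat ((n div 2) choose k) * q ^ (2*k))"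
proof (intro conjI)
  have nn: "n - n div 2 = (n + 1) div 2" by simp
  have "(\<Sum>\<pi>\<in>ICinv321 (2*n+1). q ^ des_plus (2*n+1) \<pi>) = (\<Sum>s\<in>{s. PS n s}. q ^ des_plus (2*n+1) (ext n s))"
    by (rule IC_reindex)
  also have "\<dots> = (\<Sum>s\<in>{s. PS n s}. \<Prod>i\<in>Des n s. q)"
  proof (rule sum.cong)
    fix s assume "s \<in> {s. PS n s}"
    then have "Des_plus (2 * n + 1) (ext n s) = Des n s" using Desplus_ext by simp
    then show "q ^ des_plus (2*n+1) (ext n s) = (\<Prod>i\<in>Des n s. q)" unfolding des_plus_def by simp
  qed simp
  also have "\<dots> = BB (\<lambda>_. q) (n - n div 2) (n div 2)" by (rule gen_sum[OF sym_des])
  also have "\<dots> = TT q ((n + 1) div 2) (n div 2)" using BB_des nn by metis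
  finally show "(\<Sum>\<pi>\<in>ICinv321 (2*n+1). q ^ des_plus (2*n+1) \<pi>)
           = (\<Sum>k=0..n div 2. of_nat (((n+1) div 2) choose k) * of_nat ((n div 2) choose k) * q ^ k)"
    unfolding TT_target .
next
  have "(\<Sum>\<pi>\<in>ICinv321 (2*n+1). q ^ maj_plus (2*n+1) \<pi>) = (\<Sum>s\<in>{s. PS n s}. q ^ maj_plus (2*n+1) (ext n s))"
    by (rule IC_reindex)
  also have "\<dots> = (\<Sum>s\<in>{s. PS n s}. \<Prod>i\<in>Des n s. q ^ i)"
  proof (rule sum.cong)
    fix s assume "s \<in> {s. PS n s}"
    then have "Des_plus (2 * n + 1) (ext n s) = Des n s" using Desplus_ext by simp
    then show "q ^ maj_plus (2*n+1) (ext n s) = (\<Prod>i\<in>Des n s. q ^ i)" unfolding maj_plus_def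
      by (simp add: power_sum)
  qed simp
  also have "\<dots> = BB (\<lambda>i. q ^ i) (n - n div 2) (n div 2)" by (rule gen_sum[OF BB_maj_sym])
  also have "\<dots> = qbinom q n (n div 2)" by (simp add: BB_maj)
  finally show "(\<Sum>\<pi>\<in>ICinv321 (2*n+1). q ^ maj_plus (2*n+1) \<pi>) = qbinom q n (n div 2)" .
next
  have nn: "n - n div 2 = (n + 1) div 2" by simp
  have "(\<Sum>\<pi>\<in>ICinv321 (2*n+1). q ^ des (2*n+1) \<pi>) = (\<Sum>s\<in>{s. PS n s}. q ^ des (2*n+1) (ext n s))"
    by (rule IC_reindex)
  also have "\<dots> = (\<Sum>s\<in>{s. PS n s}. \<Prod>i\<in>Des n s. q ^ 2)"
  proof (rule sum.cong)
    fix s assume "s \<in> {s. PS n s}"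
    then have "des (2 * n + 1) (ext n s) = 2 * card (Des n s)" using des_ext by simp
    then show "q ^ des (2*n+1) (ext n s) = (\<Prod>i\<in>Des n s. q ^ 2)" by (simp add: power_mult)
  qed simp
  also have "\<dots> = BB (\<lambda>_. q ^ 2) (n - n div 2) (n div 2)" by (rule gen_sum[OF sym_des])
  also have "\<dots> = TT (q ^ 2) ((n + 1) div 2) (n div 2)" using BB_des nn by metis
  finally show "(\<Sum>\<pi>\<in>ICinv321 (2*n+1). q ^ des (2*n+1) \<pi>)
           = (\<Sum>k=0..n div 2. of_nat (((n+1) div 2) choose k) * of_nat ((n div 2) choose k) * q ^ (2*k))"
    unfolding TT_target by (simp add: power_mult)
qed

end
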